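(* Let $n$ be a positive integer and $t\ge 3$. Then $\tilde{R}(\dot C^{(rbr)}_{t},Q_n)\le (t-1)n$.
   Context: $\dot C_t^{(rbr)}$ denotes the chain on $t$ vertices colored alternately red and blue, with red minimal vertex. $Q_N$ is the Boolean lattice of all subsets of an $N$-element set ordered by inclusion. In a blue/red coloring of $Q_N$, a copy of a colored poset $\dot P$ is an induced subposet isomorphic to $P$ with matching colors. The poset Erdős–Hajnal number $\tilde{R}(\dot P,Q_n)$ is the minimum $N$ such that every blue/red coloring of $Q_N$ contains a copy of $\dot P$ or a monochromatic induced copy of $Q_n$. *)

theory Defs
  imports Main
begin

datatype color = Red | Blue

text \<open>A blue/red coloring of the Boolean lattice Q_N is a map c on subsets of {0..<N};
  only its values on subsets of {0..<N} matter.\<close>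

definition has_copy ::
  "nat \<Rightarrow> (nat set \<Rightarrow> color) \<Rightarrow> 'a set \<Rightarrow> ('a \<Rightarrow> 'a \<Rightarrow> bool) \<Rightarrow> ('a \<Rightarrow> color) \<Rightarrow> bool" where
  "has_copy N c P le col \<longleftrightarrow>
     (\<exists>f. inj_on f P \<and> (\<forall>x\<in>P. f x \<subseteq> {0..<N} \<and> c (f x) = col x) \<and>
          (\<forall>x\<in>P. \<forall>y\<in>P. le x y \<longleftrightarrow> f x \<subseteq> f y))"

definition has_mono_Q :: "nat \<Rightarrow> (nat set \<Rightarrow> color) \<Rightarrow> nat \<Rightarrow> bool" where
  "has_mono_Q N c n \<longleftrightarrow> (\<exists>k. has_copy N c (Pow {0..<n}) (\<subseteq>) (\<lambda>_. k))"

definition poset_EH ::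
  "'a set \<Rightarrow> ('a \<Rightarrow> 'a \<Rightarrow> bool) \<Rightarrow> ('a \<Rightarrow> color) \<Rightarrow> nat \<Rightarrow> nat" where
  "poset_EH P le col n =
     (LEAST N. \<forall>c. has_copy N c P le col \<or> has_mono_Q N c n)"

text \<open>The chain on t vertices colored alternately red and blue, minimal vertex red:
  vertices 0 < 1 < ... < t-1, vertex i red iff i is even.\<close>
definition chain_rbr_col :: "nat \<Rightarrow> color" where
  "chain_rbr_col i = (if even i then Red else Blue)"

end

theory Submission
  imports Defs
begin

definition chainP :: "nat \<Rightarrow> (nat set \<Rightarrow> color) \<Rightarrow> nat \<Rightarrow> bool" where
  "chainP N c t = (\<exists>g. (\<forall>i<t. g i \<subseteq> {0..<N} \<and> c (g i) = chain_rbr_col i) \<and>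
      (\<forall>i. Suc i < t \<longrightarrow> g i \<subset> g (Suc i)))"

lemma cube_iff:
  fixes W A B :: "nat set" and m :: nat
  assumes "W \<subseteq> {0..<m}"
  shows "(W \<union> (+) m ` A \<subseteq> W \<union> (+) m ` B) \<longleftrightarrow> A \<subseteq> B"
proof
  assume h: "W \<union> (+) m ` A \<subseteq> W \<union> (+) m ` B"
  show "A \<subseteq> B"
  proof
    fix x assume "x \<in> A"
    then have "m + x \<in> W \<union> (+) m ` B" using h by auto
    moreover have "m + x \<notin> {0..<m}" by simp
    then have "m + x \<notin> W" using assms by blast
    ultimately show "x \<in> B" by auto
  qed
qed auto

lemma mono_Q_intro:
  assumes "\<And>A B. A \<subseteq> {0..<n} \<Longrightarrow> B \<subseteq> {0..<n} \<Longrightarrow> h A \<subseteq> h B \<longleftrightarrow> A \<subseteq> B"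
    and "\<And>A. A \<subseteq> {0..<n} \<Longrightarrow> h A \<subseteq> {0..<N}"
    and "\<And>A. A \<subseteq> {0..<n} \<Longrightarrow> c (h A) = k"
  shows "has_mono_Q N c n"
  unfolding has_mono_Q_def has_copy_def
proof (intro exI conjI)
  show "inj_on h (Pow {0..<n})"
    by (rule inj_onI) (use assms(1) in blast)
qed (use assms in auto)

lemma mono_Q_le:
  assumes "has_mono_Q N c n" "N \<le> M" shows "has_mono_Q M c n"
proof -
  obtain k f where f: "inj_on f (Pow {0..<n})"
    "\<forall>x\<in>Pow {0..<n}. f x \<subseteq> {0..<N} \<and> c (f x) = k"
    "\<forall>x\<in>Pow {0..<n}. \<forall>y\<in>Pow {0..<n}. x \<subseteq> y \<longleftrightarrow> f x \<subseteq> f y"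
    using assms(1) unfolding has_mono_Q_def has_copy_def by blast
  have "\<forall>x\<in>Pow {0..<n}. f x \<subseteq> {0..<M} \<and> c (f x) = k"
  proof
    fix x assume "x \<in> Pow {0..<n}"
    then have "f x \<subseteq> {0..<N}" "c (f x) = k" using f(2) by auto
    moreover have "{0..<N} \<subseteq> {0..<M}" using assms(2) by auto
    ultimately show "f x \<subseteq> {0..<M} \<and> c (f x) = k" by blast
  qed
  then show ?thesis unfolding has_mono_Q_def has_copy_def using f(1,3) by blast
qed

lemma chain_strict:
  assumes "\<forall>i. Suc i < t \<longrightarrow> g i \<subset> g (Suc i)"
  shows "i < j \<Longrightarrow> j < t \<Longrightarrow> g i \<subset> g j"
proof (induction j)
  case 0 then show ?case by simp
next
  case (Suc j)
  then show ?case using assms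
    by (metis less_Suc_eq order.strict_trans Suc_lessD)
qed

lemma chain_copy:
  assumes "chainP N c t"
  shows "has_copy N c {0..<t} (\<le>) chain_rbr_col"
proof -
  obtain g where g1: "\<forall>i<t. g i \<subseteq> {0..<N} \<and> c (g i) = chain_rbr_col i"
    and g2: "\<forall>i. Suc i < t \<longrightarrow> g i \<subset> g (Suc i)"
    using assms unfolding chainP_def by blast
  have st: "\<And>i j. i < j \<Longrightarrow> j < t \<Longrightarrow> g i \<subset> g j" using chain_strict[OF g2] by blast
  have le: "\<And>i j. i \<in> {0..<t} \<Longrightarrow> j \<in> {0..<t} \<Longrightarrow> i \<le> j \<longleftrightarrow> g i \<subseteq> g j"
  proof -
    fix i j assume "i \<in> {0..<t}" "j \<in> {0..<t}"
    show "i \<le> j \<longleftrightarrow> g i \<subseteq> g j"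
    proof (rule linorder_cases[of i j])
      assume "j < i" then show ?thesis using st[of j i] \<open>i \<in> {0..<t}\<close> by auto
    qed (use st[of i j] \<open>j \<in> {0..<t}\<close> in auto)
  qed
  show ?thesis
    unfolding has_copy_def
  proof (intro exI conjI)
    show "inj_on g {0..<t}"
      by (rule inj_onI) (metis le order.antisym order.refl)
  qed (use g1 le in auto)
qed

lemma base3:
  assumes "n \<ge> 1"
  shows "chainP (2*n) c 3 \<or> has_mono_Q (2*n) c n"
proof -
  define Y where "Y = (+) n ` {0..<n}"
  have Ysub: "Y \<subseteq> {0..<2*n}" unfolding Y_def by auto
  have Yne: "Y \<noteq> {}" using assms unfolding Y_def by auto
  have col: "chain_rbr_col 0 = Red" "chain_rbr_col 1 = Blue" "chain_rbr_col 2 = Red"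
    by (auto simp: chain_rbr_col_def)
  have mk: "chainP (2*n) c 3" if "a \<subset> b" "b \<subset> d" "d \<subseteq> {0..<2*n}"
      "c a = Red" "c b = Blue" "c d = Red" for a b d
    unfolding chainP_def
    apply (rule exI[of _ "\<lambda>i. if i = 0 then a else if i = 1 then b else d"])
    using that col by (auto simp: less_Suc_eq numeral_3_eq_3 numeral_2_eq_2)
  show ?thesis
  proof (cases "\<exists>S\<subseteq>{0..<n}. c S = Red \<and> c (S \<union> Y) = Red")
    case True
    then obtain S where S: "S \<subseteq> {0..<n}" "c S = Red" "c (S \<union> Y) = Red" by blast
    show ?thesis
    proof (cases "\<forall>T\<subseteq>{0..<n}. c (S \<union> (+) n ` T) = Red")
      case True
      have "has_mono_Q (2*n) c n"
        by (rule mono_Q_intro[where h="\<lambda>T. S \<union> (+) n ` T" and k=Red])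
          (use cube_iff[OF S(1)] True S(1) in auto)
      then show ?thesis by simp
    next
      case False
      then obtain T where T: "T \<subseteq> {0..<n}" "c (S \<union> (+) n ` T) \<noteq> Red" by blast
      then have cb: "c (S \<union> (+) n ` T) = Blue" by (cases "c (S \<union> (+) n ` T)") auto
      have "T \<noteq> {}" using T S by auto
      have "T \<noteq> {0..<n}" using T S unfolding Y_def by auto
      have sub1: "S \<subset> S \<union> (+) n ` T"
      proof -
        obtain x where "x \<in> T" using \<open>T \<noteq> {}\<close> by auto
        moreover have "n + x \<notin> S" using S(1) by auto
        ultimately show ?thesis by auto
      qed
      have sub2: "S \<union> (+) n ` T \<subset> S \<union> Y"
        using cube_iff[OF S(1), of "{0..<n}" T] T \<open>T \<noteq> {0..<n}\<close> unfolding Y_def by auto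
      have "S \<union> Y \<subseteq> {0..<2*n}" using S(1) Ysub by auto
      then show ?thesis using mk[OF sub1 sub2] S cb by blast
    qed
  next
    case False
    then have F: "\<And>S. S \<subseteq> {0..<n} \<Longrightarrow> c S = Blue \<or> c (S \<union> Y) = Blue"
      by (metis color.exhaust)
    define L where "L = {S. \<forall>S'\<subseteq>S. c S' = Blue}"
    define h where "h S = (if S \<in> L then S else S \<union> Y)" for S
    show ?thesis
    proof (cases "\<forall>S\<subseteq>{0..<n}. c (h S) = Blue")
      case True
      have "has_mono_Q (2*n) c n"
      proof (rule mono_Q_intro[where h=h and k=Blue])
        fix A B assume A: "A \<subseteq> {0..<n}" and B: "B \<subseteq> {0..<n}"
        have "h A = A \<union> (+) n ` (if A \<in> L then {} else {0..<n})"
          unfolding h_def Y_def by auto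
        moreover have "h B = B \<union> (+) n ` (if B \<in> L then {} else {0..<n})"
          unfolding h_def Y_def by auto
        moreover have "A \<subseteq> B \<Longrightarrow> B \<in> L \<Longrightarrow> A \<in> L" unfolding L_def by auto
        moreover have "(A \<union> (+) n ` P \<subseteq> B \<union> (+) n ` Q) \<longleftrightarrow> A \<subseteq> B \<and> P \<subseteq> Q"
          if "P \<subseteq> {0..<n}" "Q \<subseteq> {0..<n}" for P Q
        proof
          assume h: "A \<union> (+) n ` P \<subseteq> B \<union> (+) n ` Q"
          have "A \<subseteq> B"
          proof
            fix x assume "x \<in> A" then have "x < n" "x \<in> B \<union> (+) n ` Q" using A h by auto
            then show "x \<in> B" by auto
          qed
          moreover have "P \<subseteq> Q"
          proof
            fix x assume "x \<in> P" then have "n + x \<in> B \<union> (+) n ` Q" using h by auto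
            moreover have "n + x \<notin> B" using B by auto
            ultimately show "x \<in> Q" by auto
          qed
          ultimately show "A \<subseteq> B \<and> P \<subseteq> Q" by simp
        qed auto
        ultimately show "h A \<subseteq> h B \<longleftrightarrow> A \<subseteq> B" by auto
      next
        fix A assume "A \<subseteq> {0..<n}" then show "h A \<subseteq> {0..<2*n}"
          using Ysub unfolding h_def by auto
      next
        fix A assume "A \<subseteq> {0..<n}" then show "c (h A) = Blue" using True by auto
      qed
      then show ?thesis by simp
    next
      case False
      then obtain S where S: "S \<subseteq> {0..<n}" "c (h S) \<noteq> Blue" by blast
      then have "S \<notin> L" unfolding h_def L_def by (auto split: if_splits)
      then have cS: "c (S \<union> Y) = Red" using S unfolding h_def by (cases "c (S \<union> Y)") auto
      from \<open>S \<notin> L\<close> obtain S' where S': "S' \<subseteq> S" "c S' \<noteq> Blue" unfolding L_def by auto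
      then have cS': "c S' = Red" by (cases "c S'") auto
      have "S' \<subseteq> {0..<n}" using S S' by auto
      then have cY: "c (S' \<union> Y) = Blue" using F[of S'] cS' by auto
      have "S' \<noteq> S" using cY cS by auto
      have sub1: "S' \<subset> S' \<union> Y"
      proof -
        have "n \<in> Y" using assms unfolding Y_def by force
        moreover have "n \<notin> S'" using \<open>S' \<subseteq> {0..<n}\<close> by auto
        ultimately show ?thesis by auto
      qed
      have sub2: "S' \<union> Y \<subset> S \<union> Y"
      proof -
        obtain x where "x \<in> S" "x \<notin> S'" using S' \<open>S' \<noteq> S\<close> by auto
        moreover have "x \<notin> Y" using \<open>x \<in> S\<close> S unfolding Y_def by auto
        ultimately show ?thesis using S' by auto
      qed
      have "S \<union> Y \<subseteq> {0..<2*n}" using S(1) Ysub by auto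
      then show ?thesis using mk[OF sub1 sub2] cS' cY cS by blast
    qed
  qed
qed

lemma col_ne: "chain_rbr_col (Suc i) \<noteq> chain_rbr_col i"
  by (auto simp: chain_rbr_col_def)

lemma two_col: "(x::color) \<noteq> y \<Longrightarrow> y \<noteq> z \<Longrightarrow> x = z"
  by (cases x; cases y; cases z) auto

lemma step:
  assumes IH: "chainP N c t \<or> has_mono_Q N c n" and t: "t \<ge> 1"
  shows "chainP (N + n) c (Suc t) \<or> has_mono_Q (N + n) c n"
proof (cases "has_mono_Q N c n")
  case True
  then show ?thesis using mono_Q_le[of N c n "N + n"] by simp
next
  case False
  then obtain g where g1: "\<forall>i<t. g i \<subseteq> {0..<N} \<and> c (g i) = chain_rbr_col i"
    and g2: "\<forall>i. Suc i < t \<longrightarrow> g i \<subset> g (Suc i)"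
    using IH unfolding chainP_def by blast
  define W where "W = g (t - 1)"
  have W: "W \<subseteq> {0..<N}" "c W = chain_rbr_col (t - 1)" using g1 t unfolding W_def by auto
  have tt: "Suc (t - 1) = t" using t by simp
  show ?thesis
  proof (cases "\<exists>T\<subseteq>{0..<n}. c (W \<union> (+) N ` T) = chain_rbr_col t")
    case True
    then obtain T where T: "T \<subseteq> {0..<n}" "c (W \<union> (+) N ` T) = chain_rbr_col t" by blast
    have "T \<noteq> {}" using T W col_ne[of "t - 1"] tt by auto
    then obtain x where "x \<in> T" by auto
    moreover have "N + x \<notin> W" using W(1) by auto
    ultimately have sub: "W \<subset> W \<union> (+) N ` T" by auto
    have "chainP (N + n) c (Suc t)"
      unfolding chainP_def
    proof (rule exI[of _ "g(t := W \<union> (+) N ` T)"], rule conjI; intro allI impI)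
      fix i assume "i < Suc t"
      then show "(g(t := W \<union> (+) N ` T)) i \<subseteq> {0..<N + n} \<and>
          c ((g(t := W \<union> (+) N ` T)) i) = chain_rbr_col i"
      proof (cases "i = t")
        case False
        then have "i < t" using \<open>i < Suc t\<close> by simp
        then have "g i \<subseteq> {0..<N}" "c (g i) = chain_rbr_col i" using g1 by auto
        moreover have "{0..<N} \<subseteq> {0..<N + n}" by auto
        ultimately show ?thesis using False by auto
      qed (use T W in auto)
    next
      fix i assume "Suc i < Suc t"
      then show "(g(t := W \<union> (+) N ` T)) i \<subset> (g(t := W \<union> (+) N ` T)) (Suc i)"
      proof (cases "Suc i = t")
        case True
        then have "i = t - 1" "i \<noteq> t" by auto
        then show ?thesis using sub unfolding W_def by simp
      next
        case False
        then have "Suc i < t" using \<open>Suc i < Suc t\<close> by simp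
        moreover have "i \<noteq> t" "Suc i \<noteq> t" using \<open>Suc i < t\<close> by auto
        ultimately show ?thesis using g2 by simp
      qed
    qed
    then show ?thesis by simp
  next
    case False
    define k where "k = chain_rbr_col (t - 1)"
    have "has_mono_Q (N + n) c n"
    proof (rule mono_Q_intro[where h="\<lambda>T. W \<union> (+) N ` T" and k=k])
      fix A B :: "nat set" show "(W \<union> (+) N ` A \<subseteq> W \<union> (+) N ` B) \<longleftrightarrow> A \<subseteq> B"
        using cube_iff[OF W(1)] .
    next
      fix A assume "A \<subseteq> {0..<n}" then show "W \<union> (+) N ` A \<subseteq> {0..<N + n}" using W(1) by auto
    next
      fix A assume A: "A \<subseteq> {0..<n}"
      then have "c (W \<union> (+) N ` A) \<noteq> chain_rbr_col t" using False by auto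
      moreover have "chain_rbr_col t \<noteq> k" using col_ne[of "t - 1"] tt unfolding k_def by simp
      ultimately show "c (W \<union> (+) N ` A) = k"
        using two_col by blast
    qed
    then show ?thesis by simp
  qed
qed

lemma all_t:
  assumes "n \<ge> 1" "t \<ge> 3"
  shows "chainP ((t - 1) * n) c t \<or> has_mono_Q ((t - 1) * n) c n"
  using assms(2)
proof (induction t rule: nat_induct_at_least)
  case base
  have e: "(3::nat) - 1 = 2" by simp
  show ?case using base3[OF assms(1), of c] unfolding e .
next
  case (Suc t)
  have "(Suc t - 1) * n = (t - 1) * n + n" using Suc.hyps by (cases t) auto
  then show ?case using step[OF Suc.IH] Suc.hyps by simp
qed

theorem lemma16:
  fixes n t :: nat
  assumes "n \<ge> 1" and "t \<ge> 3"
  shows "poset_EH {0..<t} (\<le>) chain_rbr_col n \<le> (t - 1) * n"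
  unfolding poset_EH_def
proof (rule Least_le, rule allI)
  fix c
  show "has_copy ((t - 1) * n) c {0..<t} (\<le>) chain_rbr_col \<or> has_mono_Q ((t - 1) * n) c n"
    using all_t[OF assms, of c] chain_copy by blast
qed

end
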